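(* Let $\mathcal{M}$ be a set of mappings over a database schema $\Sigma$. Then $\mathcal{M}\equiv\mathrm{split}(\mathcal{M})$.
   Context: A mapping is $L(\vec t) \leftsquigarrow U(\vec x)$ with $L$ a concept or role name, $\vec t$ a tuple of terms over the variables $\vec x$ (built with function symbols, or plain variables), and $U$ a view name whose extension $U^{\mathcal{D}}$ on a database instance $\mathcal{D}$ of $\Sigma$ is given by a query (possibly a non-recursive Datalog query with function symbols, whose answers may be tuples of terms $f(\vec a)$). The virtual ABox is $\mathcal{A}_{(\mathcal{M},\mathcal{D})}=\{L(\vec t\,[\vec x\mapsto\vec a])\mid L(\vec t)\leftsquigarrow U(\vec x)\in\mathcal{M},\ \vec a\in U^{\mathcal{D}}\}$, and $\mathcal{M}\equiv\mathcal{M}'$ means $\mathcal{A}_{(\mathcal{M},\mathcal{D})}=\mathcal{A}_{(\mathcal{M}',\mathcal{D})}$ for every instance $\mathcal{D}$ of $\Sigma$. Split: if $m=L(\vec x)\leftsquigarrow U(\vec x)$ where $U$ is a view name for a non-recursive Datalog query $(U(\vec x),\{U(\vec f_i(\vec x_i))\leftarrow V_i(\vec x_i)\mid 1\le i\le n\})$ (each $V_i(\vec x_i)$ possibly a conjunction of view atoms), then $\mathrm{split}(m)=\{L(\vec f_i(\vec x_i))\leftsquigarrow V_i(\vec x_i)\mid 1\le i\le n\}$; for any mapping $m'$ not of this form, $\mathrm{split}(m')=\{m'\}$. For a set, $\mathrm{split}(\mathcal{M})=\bigcup_{m\in\mathcal{M}}\mathrm{split}(m)$. *)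

theory Defs
  imports Main
begin

text \<open>Ground terms: database values (constants) and function-symbol terms f(a).\<close>
datatype ('f, 'c) gterm = GConst 'c | GFun 'f "('f, 'c) gterm list"

datatype ('f, 'x) oterm = OVar 'x | OFun 'f "('f, 'x) oterm list"

fun inst :: "('x \<Rightarrow> ('f, 'c) gterm) \<Rightarrow> ('f, 'x) oterm \<Rightarrow> ('f, 'c) gterm" where
  "inst \<sigma> (OVar x) = \<sigma> x"
| "inst \<sigma> (OFun f ts) = GFun f (map (inst \<sigma>) ts)"

type_synonym ('v, 'x) vatom = "'v \<times> 'x list"

type_synonym ('v, 'f, 'c) ext = "'v \<Rightarrow> ('f, 'c) gterm list set"

definition sat :: "('v, 'f, 'c) ext \<Rightarrow> ('x \<Rightarrow> ('f, 'c) gterm) \<Rightarrow> ('v, 'x) vatom list \<Rightarrow> bool" where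
  "sat E \<sigma> body \<longleftrightarrow> (\<forall>(V, ys) \<in> set body. map \<sigma> ys \<in> E V)"

text \<open>A Datalog rule U(f(x)) <- V(x): head tuple of terms, body conjunction of view atoms.\<close>
type_synonym ('f, 'x, 'v) rule = "('f, 'x) oterm list \<times> ('v, 'x) vatom list"

definition dl_sem :: "('v, 'f, 'c) ext \<Rightarrow> ('f, 'x, 'v) rule list \<Rightarrow> ('f, 'c) gterm list set" where
  "dl_sem E rs = {map (inst \<sigma>) h | h b \<sigma>. (h, b) \<in> set rs \<and> sat E \<sigma> b}"

text \<open>A schema with views: each view name is either a base view (None) or defined by a
  Datalog query given by its list of rules (Some rs).\<close>
type_synonym ('v, 'f, 'x) viewdefs = "'v \<Rightarrow> ('f, 'x, 'v) rule list option"

definition nonrecursive :: "('v, 'f, 'x) viewdefs \<Rightarrow> bool" where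
  "nonrecursive defs \<longleftrightarrow>
     wf {(V, U). \<exists>rs h b ys. defs U = Some rs \<and> (h, b) \<in> set rs \<and> (V, ys) \<in> set b}"

definition is_instance :: "('v, 'f, 'x) viewdefs \<Rightarrow> ('v, 'f, 'c) ext \<Rightarrow> bool" where
  "is_instance defs E \<longleftrightarrow> (\<forall>U rs. defs U = Some rs \<longrightarrow> E U = dl_sem E rs)"

text \<open>A mapping L(t) ~> source, source a conjunction of view atoms (a single atom U(x) in
  the basic case).\<close>
type_synonym ('l, 'f, 'x, 'v) mapping = "'l \<times> ('f, 'x) oterm list \<times> ('v, 'x) vatom list"

definition vabox :: "('v, 'f, 'c) ext \<Rightarrow> ('l, 'f, 'x, 'v) mapping set \<Rightarrow> ('l \<times> ('f, 'c) gterm list) set" where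
  "vabox E M = {(L, map (inst \<sigma>) t) | L t b \<sigma>. (L, t, b) \<in> M \<and> sat E \<sigma> b}"

text \<open>M == M': same virtual ABox on every instance; the type of database values 'c is
  passed explicitly.\<close>
definition mapping_equiv :: "'c itself \<Rightarrow>
  ('v, 'f, 'x) viewdefs \<Rightarrow> ('l, 'f, 'x, 'v) mapping set \<Rightarrow> ('l, 'f, 'x, 'v) mapping set \<Rightarrow> bool" where
  "mapping_equiv (_ :: 'c itself) defs M M' \<longleftrightarrow>
     (\<forall>E :: ('v, 'f, 'c) ext. is_instance defs E \<longrightarrow> vabox E M = vabox E M')"

text \<open>split on a single mapping: L(x) ~> U(x) with U defined by a Datalog query
  (x a tuple of distinct variables matching the arity of the rule heads) is replaced by
  the mappings L(f_i(x_i)) ~> V_i(x_i); any other mapping is kept.\<close>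
fun split_m :: "('v, 'f, 'x) viewdefs \<Rightarrow> ('l, 'f, 'x, 'v) mapping \<Rightarrow> ('l, 'f, 'x, 'v) mapping set" where
  "split_m defs (L, t, [(U, xs)]) =
     (case defs U of
        Some rs \<Rightarrow>
          (if t = map OVar xs \<and> distinct xs \<and> (\<forall>(h, b) \<in> set rs. length h = length xs)
           then {(L, h, b) | h b. (h, b) \<in> set rs}
           else {(L, t, [(U, xs)])})
      | None \<Rightarrow> {(L, t, [(U, xs)])})"
| "split_m defs m = {m}"

definition split :: "('v, 'f, 'x) viewdefs \<Rightarrow> ('l, 'f, 'x, 'v) mapping set \<Rightarrow> ('l, 'f, 'x, 'v) mapping set" where
  "split defs M = (\<Union>m \<in> M. split_m defs m)"

end

theory Submission
  imports Defs
begin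

lemma realize:
  assumes "distinct xs" "length v = length xs"
  shows "map (\<lambda>x. the (map_of (zip xs v) x)) xs = v"
  by (rule nth_equalityI) (use assms in \<open>auto simp: map_of_zip_nth\<close>)

lemma vabox_UN: "vabox E (\<Union>m\<in>M. S m) = (\<Union>m\<in>M. vabox E (S m))"
  unfolding vabox_def by blast

lemma vabox_single: "vabox E M = (\<Union>m\<in>M. vabox E {m})"
  unfolding vabox_def by blast

lemma split_m_ok:
  assumes "is_instance defs E"
  shows "vabox E (split_m defs m) = vabox E {m}"
proof (cases "\<exists>L xs U rs. m = (L, map OVar xs, [(U, xs)]) \<and> defs U = Some rs \<and> distinct xs
     \<and> (\<forall>(h, b) \<in> set rs. length h = length xs)")
  case True
  then obtain L xs U rs where m: "m = (L, map OVar xs, [(U, xs)])" and d: "defs U = Some rs"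
    and dx: "distinct xs" and len: "\<forall>(h, b) \<in> set rs. length h = length xs" by blast
  have EU: "E U = dl_sem E rs" using assms d unfolding is_instance_def by blast
  have sm: "split_m defs m = {(L, h, b) | h b. (h, b) \<in> set rs}" using m d dx len by simp
  have A: "vabox E (split_m defs m) = {(L, v) | v. v \<in> E U}"
    unfolding sm EU vabox_def dl_sem_def by blast
  have B: "vabox E {m} = {(L, map \<sigma> xs) | \<sigma>. map \<sigma> xs \<in> E U}"
    unfolding m vabox_def sat_def by (auto simp: comp_def)
  have C: "{(L, v) | v. v \<in> E U} \<subseteq> {(L, map \<sigma> xs) | \<sigma>. map \<sigma> xs \<in> E U}"
  proof
    fix p assume "p \<in> {(L, v) | v. v \<in> E U}"
    then obtain v where p: "p = (L, v)" and v: "v \<in> E U" by blast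
    from v have "length v = length xs" using len unfolding EU dl_sem_def by auto
    then have eq: "map (\<lambda>x. the (map_of (zip xs v) x)) xs = v" using realize dx by blast
    have "p = (L, map (\<lambda>x. the (map_of (zip xs v) x)) xs) \<and> map (\<lambda>x. the (map_of (zip xs v) x)) xs \<in> E U"
      using p v eq by simp
    then show "p \<in> {(L, map \<sigma> xs) | \<sigma>. map \<sigma> xs \<in> E U}" by blast
  qed
  show ?thesis using A B C by blast
next
  case False
  obtain L t src where m: "m = (L, t, src)" by (cases m)
  have "split_m defs m = {m}"
  proof (cases src)
    case Nil then show ?thesis using m by simp
  next
    case (Cons a rest)
    obtain U xs where a: "a = (U, xs)" by (cases a)
    show ?thesis
    proof (cases rest)
      case Nil
      show ?thesis
      proof (cases "defs U")
        case None then show ?thesis using m Cons a Nil by simp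
      next
        case (Some rs)
        then show ?thesis using m Cons a Nil False by auto
      qed
    next
      case (Cons b rest') then show ?thesis using m \<open>src = a # rest\<close> by simp
    qed
  qed
  then show ?thesis by simp
qed

theorem corollary1:
  fixes defs :: "('v, 'f, 'x) viewdefs"
    and M :: "('l, 'f, 'x, 'v) mapping set"
  assumes "nonrecursive defs"
  shows "mapping_equiv TYPE('c) defs M (split defs M)"
  unfolding mapping_equiv_def split_def
proof (intro allI impI)
  fix E :: "('v, 'f, 'c) ext"
  assume "is_instance defs E"
  then show "vabox E M = vabox E (\<Union>m\<in>M. split_m defs m)"
    unfolding vabox_UN by (subst vabox_single) (simp add: split_m_ok)
qed

end
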